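(* Let $p$ be an odd prime and let $X$ be a finite family of $4p-3$ lattice points in $\mathbb{Z}^2$ (repetitions allowed). Then \[ 3-2(p-1,X)-2(p,X)+(2p-1,X)+(2p,X)\equiv 0 \pmod p. \]
   Context: For a finite family $X$ of lattice points in $\mathbb{Z}^2$ (points may repeat; subsets are subfamilies, i.e. subsets of the index set) and an integer $n\ge 0$, $(n,X)$ denotes the number of $n$-element subfamilies of $X$ whose coordinatewise sum is congruent to $(0,0)$ modulo $p$. *)

theory Defs
  imports Main "HOL-Number_Theory.Cong"
begin

text \<open>A finite family of lattice points is a map X from a finite index set I to int x int.
  zero_sum_count p n I X is the number of n-element subsets S of the index set I
  such that the coordinatewise sum of X over S is congruent to (0,0) modulo p.\<close>
definition zero_sum_count :: "nat \<Rightarrow> nat \<Rightarrow> 'i set \<Rightarrow> ('i \<Rightarrow> int \<times> int) \<Rightarrow> nat" where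
  "zero_sum_count p n I X =
     card {S. S \<subseteq> I \<and> card S = n \<and>
              [(\<Sum>i\<in>S. fst (X i)) = 0] (mod int p) \<and>
              [(\<Sum>i\<in>S. snd (X i)) = 0] (mod int p)}"

end

theory Submission
  imports Defs "HOL-Number_Theory.Number_Theory"
begin


inductive lowdeg :: "nat \<Rightarrow> ('i set \<Rightarrow> int) \<Rightarrow> bool" where
  ld_const: "lowdeg 0 (\<lambda>S. c)"
| ld_mono: "lowdeg d f \<Longrightarrow> d \<le> e \<Longrightarrow> lowdeg e f"
| ld_add: "lowdeg d f \<Longrightarrow> lowdeg d g \<Longrightarrow> lowdeg d (\<lambda>S. f S + g S)"
| ld_var: "lowdeg d f \<Longrightarrow> lowdeg (Suc d) (\<lambda>S. (if i \<in> S then 1 else 0) * f S)"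

lemma ld_cong: "lowdeg d f \<Longrightarrow> (\<And>S. f S = g S) \<Longrightarrow> lowdeg d g"
proof -
  assume "lowdeg d f" "\<And>S. f S = g S"
  then have "f = g" by auto
  with \<open>lowdeg d f\<close> show ?thesis by simp
qed

lemma Pow_insert_sum:
  assumes "finite J" "i \<notin> J"
  shows "(\<Sum>S\<in>Pow (insert i J). g S) = (\<Sum>S\<in>Pow J. g S) + (\<Sum>S\<in>Pow J. g (insert i S))"
proof -
  have inj: "inj_on (insert i) (Pow J)" using assms(2) unfolding inj_on_def
    by (metis PowD insert_ident subsetD)
  have "Pow (insert i J) = Pow J \<union> insert i ` Pow J" by (rule Pow_insert)
  moreover have "Pow J \<inter> insert i ` Pow J = {}" using assms(2) by auto
  ultimately show ?thesis using assms(1) inj by (simp add: sum.union_disjoint sum.reindex)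
qed

lemma alt_sum_Pow:
  assumes "finite J" "J \<noteq> {}"
  shows "(\<Sum>S\<in>Pow J. (-1::int)^card S * c) = 0"
proof -
  obtain i J' where J: "J = insert i J'" "i \<notin> J'" using assms(2)
    by (metis Set.set_insert ex_in_conv)
  have fin: "finite J'" using assms(1) J by auto
  have "(\<Sum>S\<in>Pow J. (-1::int)^card S * c) = (\<Sum>S\<in>Pow J'. (-1::int)^card S * c) + (\<Sum>S\<in>Pow J'. (-1::int)^card (insert i S) * c)"
    unfolding J(1) by (rule Pow_insert_sum[OF fin J(2)])
  also have "(\<Sum>S\<in>Pow J'. (-1::int)^card (insert i S) * c) = (\<Sum>S\<in>Pow J'. - ((-1::int)^card S * c))"
  proof (rule sum.cong)
    fix S assume "S \<in> Pow J'"
    then have "finite S" "i \<notin> S" using fin J(2) finite_subset by auto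
    then show "(-1::int)^card (insert i S) * c = - ((-1::int)^card S * c)" by simp
  qed simp
  finally show ?thesis by (simp add: sum_negf)
qed

lemma lowdeg_vanish:
  "lowdeg d f \<Longrightarrow> finite J \<Longrightarrow> d < card J \<Longrightarrow> (\<Sum>S\<in>Pow J. (-1::int)^card S * f (S \<union> K)) = 0"
proof (induction arbitrary: J K rule: lowdeg.induct)
  case (ld_const c)
  then have "J \<noteq> {}" by auto
  then show ?case using alt_sum_Pow[of J c] ld_const by auto
next
  case (ld_mono d f e)
  then show ?case by auto
next
  case (ld_add d f g)
  then show ?case by (simp add: distrib_left sum.distrib)
next
  case (ld_var d f i)
  show ?case
  proof (cases "i \<in> K")
    case True
    then show ?thesis using ld_var.IH[of J K] ld_var.prems by simp
  next
    case iK: False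
    show ?thesis
    proof (cases "i \<in> J")
      case False
      have "\<And>S. S \<in> Pow J \<Longrightarrow> i \<notin> S \<union> K" using False iK by auto
      then show ?thesis by (intro sum.neutral) auto
    next
      case True
      define J' where "J' = J - {i}"
      have J: "J = insert i J'" "i \<notin> J'" using True J'_def by auto
      have fin: "finite J'" using ld_var.prems J by auto
      have cJ: "d < card J'" using ld_var.prems J fin by simp
      let ?g = "\<lambda>S. (-1::int)^card S * ((if i \<in> S \<union> K then 1 else 0) * f (S \<union> K))"
      have "(\<Sum>S\<in>Pow J. ?g S) = (\<Sum>S\<in>Pow J'. ?g S) + (\<Sum>S\<in>Pow J'. ?g (insert i S))"
        unfolding J(1) by (rule Pow_insert_sum[OF fin J(2)])
      also have "(\<Sum>S\<in>Pow J'. ?g S) = 0"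
        using J(2) iK by (intro sum.neutral) auto
      also have "(\<Sum>S\<in>Pow J'. ?g (insert i S)) = (\<Sum>S\<in>Pow J'. - ((-1::int)^card S * f (S \<union> insert i K)))"
      proof (rule sum.cong)
        fix S assume "S \<in> Pow J'"
        then have "finite S" "i \<notin> S" using fin J(2) finite_subset by auto
        then show "?g (insert i S) = - ((-1::int)^card S * f (S \<union> insert i K))" by simp
      qed simp
      also have "\<dots> = 0" using ld_var.IH[OF fin cJ, of "insert i K"] by (simp add: sum_negf)
      finally show ?thesis by simp
    qed
  qed
qed

lemma lowdeg_scale: "lowdeg d f \<Longrightarrow> lowdeg d (\<lambda>S. c * f S)"
proof (induction rule: lowdeg.induct)
  case (ld_const c')
  then show ?case using lowdeg.ld_const by auto
next
  case (ld_mono d f e)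
  then show ?case using lowdeg.ld_mono by auto
next
  case (ld_add d f g)
  then show ?case using lowdeg.ld_add[OF ld_add.IH] by (rule_tac ld_cong) (auto simp: algebra_simps)
next
  case (ld_var d f i)
  then show ?case using lowdeg.ld_var[OF ld_var.IH, of i] by (rule_tac ld_cong) (auto simp: algebra_simps)
qed

lemma lowdeg_mult: "lowdeg d f \<Longrightarrow> lowdeg e g \<Longrightarrow> lowdeg (d + e) (\<lambda>S. f S * g S)"
proof (induction rule: lowdeg.induct)
  case (ld_const c)
  then show ?case using lowdeg_scale by auto
next
  case (ld_mono d f e')
  then show ?case using lowdeg.ld_mono[of "d+e" _ "e'+e"] by auto
next
  case (ld_add d f h)
  then show ?case using lowdeg.ld_add[OF ld_add.IH] by (rule_tac ld_cong) (auto simp: algebra_simps)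
next
  case (ld_var d f i)
  then show ?case using lowdeg.ld_var[OF ld_var.IH, of i] by (rule_tac ld_cong) (auto simp: algebra_simps)
qed

lemma lowdeg_sum: "finite A \<Longrightarrow> (\<And>x. x\<in>A \<Longrightarrow> lowdeg d (g x)) \<Longrightarrow> lowdeg d (\<lambda>S. \<Sum>x\<in>A. g x S)"
proof (induction rule: finite_induct)
  case empty
  then show ?case using lowdeg.ld_mono[OF lowdeg.ld_const[of 0]] by auto
next
  case (insert x F)
  then show ?case using lowdeg.ld_add[of d "g x" "\<lambda>S. \<Sum>x\<in>F. g x S"] by (rule_tac ld_cong) auto
qed

lemma lowdeg_prod: "finite A \<Longrightarrow> (\<And>x. x\<in>A \<Longrightarrow> lowdeg d (g x)) \<Longrightarrow> lowdeg (d * card A) (\<lambda>S. \<Prod>x\<in>A. g x S)"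
proof (induction rule: finite_induct)
  case empty
  then show ?case using lowdeg.ld_const[of 1] by auto
next
  case (insert x F)
  then show ?case using lowdeg_mult[of d "g x" "d * card F" "\<lambda>S. \<Prod>x\<in>F. g x S"] by (rule_tac ld_cong) auto
qed

lemma lowdeg_power: "lowdeg d f \<Longrightarrow> lowdeg (d * k) (\<lambda>S. f S ^ k)"
proof (induction k)
  case 0
  then show ?case using lowdeg.ld_const[of 1] by auto
next
  case (Suc k)
  then show ?case using lowdeg_mult[of d f "d * k" "\<lambda>S. f S ^ k"] by (rule_tac ld_cong) auto
qed

lemma lowdeg_var: "lowdeg 1 (\<lambda>S. if i \<in> S then 1 else 0)"
  using lowdeg.ld_var[OF lowdeg.ld_const[of 1], of i] by simp



lemma fermat_int:
  fixes a :: int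
  assumes p: "prime p"
  shows "[a ^ (p - 1) = (if [a = 0] (mod int p) then 0 else 1)] (mod int p)"
proof (cases "[a = 0] (mod int p)")
  case True
  have "p - 1 \<noteq> 0" using prime_gt_1_nat[OF p] by simp
  then have "[a ^ (p - 1) = 0 ^ (p - 1)] (mod int p)" using True by (intro cong_pow)
  moreover have z: "(0::int) ^ (p - 1) = 0" using \<open>p - 1 \<noteq> 0\<close> by simp
  ultimately have "[a ^ (p - 1) = 0] (mod int p)" by metis
  then show ?thesis using True by simp
next
  case False
  define b where "b = nat (a mod int p)"
  have pp: "int p > 0" using prime_gt_0_nat[OF p] by simp
  have ab: "[a = int b] (mod int p)" unfolding b_def using pp
    by (simp add: cong_def)
  have "\<not> p dvd b"
  proof
    assume "p dvd b"
    then have "[int b = 0] (mod int p)" by (simp add: cong_0_iff)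
    with ab have "[a = 0] (mod int p)" by (rule cong_trans)
    with False show False by simp
  qed
  then have "[b ^ (p - 1) = 1] (mod p)" by (rule fermat_theorem[OF p])
  then have "[int b ^ (p - 1) = 1] (mod int p)" using cong_int_iff[of "b ^ (p-1)" 1 p] by simp
  moreover have "[a ^ (p - 1) = int b ^ (p - 1)] (mod int p)" using ab by (rule cong_pow)
  ultimately show ?thesis using False cong_trans by auto
qed

lemma choose_p_nat:
  assumes p: "prime p"
  shows "r < p \<Longrightarrow> [(q * p + r) choose p = q] (mod p)"
proof (induction q)
  case 0
  then show ?case by (simp add: binomial_eq_0)
next
  case (Suc q)
  define m where "m = q * p + r"
  have p1: "p > 1" using prime_gt_1_nat[OF p] .
  have "Suc q * p + r = m + p" unfolding m_def by simp
  then have "(Suc q * p + r) choose p = (m + p) choose p" by (rule arg_cong)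
  also have "\<dots> = (\<Sum>k\<le>p. (m choose k) * (p choose (p - k)))"
    by (rule vandermonde[symmetric])
  also have "{..p} = insert 0 (insert p {1..<p})" using p1 by auto
  also have "(\<Sum>k\<in>insert 0 (insert p {1..<p}). (m choose k) * (p choose (p - k)))
     = 1 + (m choose p) + (\<Sum>k\<in>{1..<p}. (m choose k) * (p choose (p - k)))"
    using p1 by simp
  finally have eq: "(Suc q * p + r) choose p = 1 + (m choose p) + (\<Sum>k\<in>{1..<p}. (m choose k) * (p choose (p - k)))" .
  have "p dvd (\<Sum>k\<in>{1..<p}. (m choose k) * (p choose (p - k)))"
  proof (rule dvd_sum)
    fix k assume "k \<in> {1..<p}"
    then have "p dvd (p choose (p - k))" using p p1 by (intro dvd_choose_prime) auto
    then show "p dvd (m choose k) * (p choose (p - k))" by simp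
  qed
  then have "[(\<Sum>k\<in>{1..<p}. (m choose k) * (p choose (p - k))) = 0] (mod p)" by (simp add: cong_0_iff)
  moreover have "[m choose p = q] (mod p)" using Suc unfolding m_def by simp
  ultimately have "[1 + (m choose p) + (\<Sum>k\<in>{1..<p}. (m choose k) * (p choose (p - k))) = 1 + q + 0] (mod p)"
    by (intro cong_add cong_refl)
  then show ?case using eq by simp
qed

lemma choose_p_int:
  assumes p: "prime p"
  shows "[int (n choose p) = int (n div p)] (mod int p)"
proof -
  have "p > 0" using prime_gt_0_nat[OF p] .
  then have "n = (n div p) * p + n mod p" "n mod p < p" by simp_all
  then have "[n choose p = n div p] (mod p)" using choose_p_nat[OF p, of "n mod p" "n div p"] by simp
  then show ?thesis by (simp add: cong_int_iff)
qed



definition dl :: "nat \<Rightarrow> nat \<Rightarrow> int" where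
  "dl k n = (if n = k then 1 else 0)"

definition wfun :: "nat \<Rightarrow> nat \<Rightarrow> int" where
  "wfun p n = 3 * dl 0 n - 2 * dl (p - 1) n - 2 * dl p n + dl (2 * p - 1) n + dl (2 * p) n"

definition Gf :: "nat \<Rightarrow> nat \<Rightarrow> int" where
  "Gf p n = 1 + 2 * (int n + 1) ^ (p - 1) - 3 * (int n) ^ (p - 1)
     - int (n choose p) * ((int n + 1) ^ (p - 1) - (int n) ^ (p - 1))"

lemma wf_values:
  assumes p3: "p \<ge> 3" and r: "r < p" and q: "q * p + r \<le> 4 * p - 3"
  and E0: "E0 = (if r = 0 then 0 else 1)" and E1: "E1 = (if r = p - 1 then 0 else 1)"
  and ev: "r = p - 1 \<Longrightarrow> even r"
  shows "(-1::int) ^ q * (-1) ^ r * (1 + 2 * E1 - 3 * E0 - int q * (E1 - E0)) = wfun p (q * p + r)"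
proof -
  have "q < 4"
  proof (rule ccontr)
    assume "\<not> q < 4"
    then have "q * p \<ge> 4 * p" by simp
    then show False using q p3 by linarith
  qed
  then consider "q = 0" | "q = 1" | "q = 2" | "q = 3" by linarith
  then show ?thesis
  proof cases
    case 1
    then show ?thesis using p3 r ev unfolding E0 E1 wfun_def dl_def by auto
  next
    case 2
    then show ?thesis using p3 r ev unfolding E0 E1 wfun_def dl_def by auto
  next
    case 3
    then show ?thesis using p3 r ev unfolding E0 E1 wfun_def dl_def by auto
  next
    case 4
    then show ?thesis using p3 r ev q unfolding E0 E1 wfun_def dl_def by auto
  qed
qed



lemma G_cong:
  assumes p: "prime p" and odd: "odd p" and n: "n \<le> 4 * p - 3"
  shows "[(-1::int) ^ n * Gf p n = wfun p n] (mod int p)"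
proof -
  define q where "q = n div p"
  define r where "r = n mod p"
  have p0: "p > 0" using prime_gt_0_nat[OF p] .
  have p3: "p \<ge> 3" using prime_ge_2_nat[OF p] odd by (cases "p = 2") auto
  have nqr: "n = q * p + r" unfolding q_def r_def by simp
  have r: "r < p" unfolding r_def using p0 by simp
  define E0 :: int where "E0 = (if r = 0 then 0 else 1)"
  define E1 :: int where "E1 = (if r = p - 1 then 0 else 1)"
  have c0: "[int n = 0] (mod int p) \<longleftrightarrow> r = 0"
    unfolding r_def by (simp add: cong_0_iff dvd_eq_mod_eq_0[symmetric])
  have c1: "[int n + 1 = 0] (mod int p) \<longleftrightarrow> r = p - 1"
  proof -
    have e: "int n + 1 = int (Suc n)" by simp
    have "[int n + 1 = 0] (mod int p) \<longleftrightarrow> p dvd Suc n"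
      unfolding e cong_0_iff by (simp only: of_nat_dvd_iff)
    also have "\<dots> \<longleftrightarrow> Suc n mod p = 0" by (simp add: dvd_eq_mod_eq_0)
    also have "\<dots> \<longleftrightarrow> r = p - 1" unfolding r_def mod_Suc using p0 by auto
    finally show ?thesis .
  qed
  have f0: "[(int n) ^ (p - 1) = E0] (mod int p)"
    using fermat_int[OF p, of "int n"] c0 unfolding E0_def by simp
  have f1: "[(int n + 1) ^ (p - 1) = E1] (mod int p)"
    using fermat_int[OF p, of "int n + 1"] c1 unfolding E1_def by simp
  have ch: "[int (n choose p) = int q] (mod int p)" unfolding q_def by (rule choose_p_int[OF p])
  have "[Gf p n = 1 + 2 * E1 - 3 * E0 - int q * (E1 - E0)] (mod int p)"
    unfolding Gf_def by (intro cong_add cong_diff cong_mult cong_refl f0 f1 ch)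
  then have "[(-1::int) ^ n * Gf p n = (-1) ^ n * (1 + 2 * E1 - 3 * E0 - int q * (E1 - E0))] (mod int p)"
    by (intro cong_mult cong_refl)
  moreover have "(-1::int) ^ n = (-1) ^ q * (-1) ^ r"
  proof -
    have "(-1::int) ^ n = ((-1) ^ p) ^ q * (-1) ^ r" unfolding nqr
      by (simp add: power_add power_mult mult.commute)
    then show ?thesis using odd by simp
  qed
  moreover have "(-1::int) ^ q * (-1) ^ r * (1 + 2 * E1 - 3 * E0 - int q * (E1 - E0)) = wfun p (q * p + r)"
    by (rule wf_values[OF p3 r _ E0_def E1_def]) (use n nqr odd p3 in auto)
  ultimately show ?thesis using nqr by simp
qed


theorem corollary6:
  fixes p :: nat and I :: "'i set" and X :: "'i \<Rightarrow> int \<times> int"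
  assumes "prime p" and "odd p"
    and "finite I" and "card I = 4 * p - 3"
  shows "[3 - 2 * int (zero_sum_count p (p - 1) I X) - 2 * int (zero_sum_count p p I X)
          + int (zero_sum_count p (2 * p - 1) I X) + int (zero_sum_count p (2 * p) I X) = 0] (mod int p)"
proof -
  note p = assms(1) and odd = assms(2) and fin = assms(3) and cI = assms(4)
  have p3: "p \<ge> 3" using prime_ge_2_nat[OF p] odd by (cases "p = 2") auto
  define a where "a i = fst (X i)" for i
  define b where "b i = snd (X i)" for i
  define y :: "'i \<Rightarrow> 'i set \<Rightarrow> int" where "y i S = (if i \<in> S then 1 else 0)" for i S
  define LA where "LA S = (\<Sum>i\<in>I. a i * y i S)" for S
  define LB where "LB S = (\<Sum>i\<in>I. b i * y i S)" for S
  define LN where "LN S = (\<Sum>i\<in>I. y i S)" for S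
  define CP where "CP S = (\<Sum>T\<in>{T. T \<subseteq> I \<and> card T = p}. \<Prod>i\<in>T. y i S)" for S
  define Q where "Q S = (\<Sum>k<p-1. of_nat (p-1 choose k) * LN S ^ k)" for S
  define F where "F S = (1 - LA S ^ (p-1)) * (1 - LB S ^ (p-1)) *
     (1 + 2 * (LN S + 1)^(p-1) - 3 * LN S ^ (p-1) - CP S * Q S)" for S
  have ldy: "lowdeg 1 (y i)" for i using lowdeg_var[of i] by (rule ld_cong) (simp add: y_def)
  have ld0: "lowdeg d (\<lambda>S. c)" for d c using ld_mono[OF ld_const[of c]] by simp
  have ldLA: "lowdeg 1 LA"
  proof -
    have "lowdeg 1 (\<lambda>S. \<Sum>i\<in>I. a i * y i S)"
      by (rule lowdeg_sum[OF fin]) (rule lowdeg_scale[OF ldy])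
    then show ?thesis by (rule ld_cong) (simp add: LA_def)
  qed
  have ldLB: "lowdeg 1 LB"
  proof -
    have "lowdeg 1 (\<lambda>S. \<Sum>i\<in>I. b i * y i S)"
      by (rule lowdeg_sum[OF fin]) (rule lowdeg_scale[OF ldy])
    then show ?thesis by (rule ld_cong) (simp add: LB_def)
  qed
  have ldLN: "lowdeg 1 LN"
  proof -
    have "lowdeg 1 (\<lambda>S. \<Sum>i\<in>I. y i S)"
      by (rule lowdeg_sum[OF fin]) (rule ldy)
    then show ?thesis by (rule ld_cong) (simp add: LN_def)
  qed
  have ld1m: "lowdeg (p - 1) (\<lambda>S. 1 - L S ^ (p - 1))" if "lowdeg 1 L" for L
  proof -
    have "lowdeg (p - 1) (\<lambda>S. 1 + (-1) * L S ^ (p - 1))"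
      using lowdeg_scale[OF lowdeg_power[OF that, of "p - 1"], of "-1"] ld0
      by (intro ld_add) auto
    then show ?thesis by (rule ld_cong) simp
  qed
  have ldCP: "lowdeg p CP"
  proof -
    have "finite {T. T \<subseteq> I \<and> card T = p}" using fin by auto
    then have "lowdeg p (\<lambda>S. \<Sum>T\<in>{T. T \<subseteq> I \<and> card T = p}. \<Prod>i\<in>T. y i S)"
    proof (rule lowdeg_sum)
      fix T assume T: "T \<in> {T. T \<subseteq> I \<and> card T = p}"
      then have "finite T" using fin finite_subset by auto
      from lowdeg_prod[OF this, of 1 y] ldy T show "lowdeg p (\<lambda>S. \<Prod>i\<in>T. y i S)" by simp
    qed
    then show ?thesis by (rule ld_cong) (simp add: CP_def)
  qed
  have ldQ: "lowdeg (p - 2) Q"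
  proof -
    have "lowdeg (p - 2) (\<lambda>S. \<Sum>k<p-1. of_nat (p-1 choose k) * LN S ^ k)"
    proof (rule lowdeg_sum)
      fix k assume "k \<in> {..<p-1}"
      then have "k \<le> p - 2" by auto
      then show "lowdeg (p - 2) (\<lambda>S. of_nat (p-1 choose k) * LN S ^ k)"
        using lowdeg_scale[OF lowdeg_power[OF ldLN, of k]] ld_mono by fastforce
    qed simp
    then show ?thesis by (rule ld_cong) (simp add: Q_def)
  qed
  have ldG: "lowdeg (2 * p - 2) (\<lambda>S. 1 + 2 * (LN S + 1)^(p-1) - 3 * LN S ^ (p-1) - CP S * Q S)"
  proof -
    have l1: "lowdeg 1 (\<lambda>S. LN S + 1)" using ld_add[OF ldLN ld0] .
    have a1: "lowdeg (2 * p - 2) (\<lambda>S. 2 * (LN S + 1)^(p-1))"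
    proof -
      have "lowdeg (1 * (p - 1)) (\<lambda>S. 2 * (LN S + 1)^(p-1))"
        by (rule lowdeg_scale[OF lowdeg_power[OF l1]])
      then show ?thesis by (rule ld_mono) (use p3 in simp)
    qed
    have a2: "lowdeg (2 * p - 2) (\<lambda>S. (-3) * LN S ^(p-1))"
    proof -
      have "lowdeg (1 * (p - 1)) (\<lambda>S. (-3) * LN S ^(p-1))"
        by (rule lowdeg_scale[OF lowdeg_power[OF ldLN]])
      then show ?thesis by (rule ld_mono) (use p3 in simp)
    qed
    have a3: "lowdeg (2 * p - 2) (\<lambda>S. (-1) * (CP S * Q S))"
    proof -
      have "lowdeg (p + (p - 2)) (\<lambda>S. (-1) * (CP S * Q S))"
        by (rule lowdeg_scale[OF lowdeg_mult[OF ldCP ldQ]])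
      then show ?thesis by (rule ld_mono) (use p3 in simp)
    qed
    have "lowdeg (2 * p - 2) (\<lambda>S. 1 + 2 * (LN S + 1)^(p-1) + (-3) * LN S ^ (p-1) + (-1) * (CP S * Q S))"
      by (intro ld_add ld0 a1 a2 a3)
    then show ?thesis by (rule ld_cong) simp
  qed
  have ldF: "lowdeg ((p - 1) + (p - 1) + (2 * p - 2)) F"
    using lowdeg_mult[OF lowdeg_mult[OF ld1m[OF ldLA] ld1m[OF ldLB]] ldG]
    by (rule ld_cong) (simp add: F_def)
  have van: "(\<Sum>S\<in>Pow I. (-1::int)^card S * F (S \<union> {})) = 0"
    by (rule lowdeg_vanish[OF ldF fin]) (use cI p3 in simp)
  define z where "z S = (if [(\<Sum>i\<in>S. fst (X i)) = 0] (mod int p) \<and> [(\<Sum>i\<in>S. snd (X i)) = 0] (mod int p) then 1 else (0::int))" for S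
  have percong: "[(-1::int)^card S * F S = z S * wfun p (card S)] (mod int p)" if S: "S \<in> Pow I" for S
  proof -
    have SI: "S \<subseteq> I" "finite S" using S fin finite_subset by auto
    have eA: "LA S = (\<Sum>i\<in>S. fst (X i))"
    proof -
      have "LA S = (\<Sum>i\<in>I. if i \<in> S then a i else 0)" unfolding LA_def y_def by (intro sum.cong) auto
      also have "\<dots> = (\<Sum>i\<in>I \<inter> S. a i)" by (rule sum.inter_restrict[OF fin, symmetric])
      also have "I \<inter> S = S" using SI by auto
      finally show ?thesis by (simp add: a_def)
    qed
    have eB: "LB S = (\<Sum>i\<in>S. snd (X i))"
    proof -
      have "LB S = (\<Sum>i\<in>I. if i \<in> S then b i else 0)" unfolding LB_def y_def by (intro sum.cong) auto
      also have "\<dots> = (\<Sum>i\<in>I \<inter> S. b i)" by (rule sum.inter_restrict[OF fin, symmetric])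
      also have "I \<inter> S = S" using SI by auto
      finally show ?thesis by (simp add: b_def)
    qed
    have eN: "LN S = int (card S)"
    proof -
      have "LN S = (\<Sum>i\<in>I. if i \<in> S then 1 else 0)" unfolding LN_def y_def by simp
      also have "\<dots> = (\<Sum>i\<in>I \<inter> S. 1)" by (rule sum.inter_restrict[OF fin, symmetric])
      also have "I \<inter> S = S" using SI by auto
      finally show ?thesis by simp
    qed
    have eC: "CP S = int (card S choose p)"
    proof -
      have "CP S = (\<Sum>T\<in>{T. T \<subseteq> I \<and> card T = p}. if T \<subseteq> S then 1 else 0)"
        unfolding CP_def
      proof (rule sum.cong)
        fix T assume "T \<in> {T. T \<subseteq> I \<and> card T = p}"
        then have fT: "finite T" using fin finite_subset by auto
        show "(\<Prod>i\<in>T. y i S) = (if T \<subseteq> S then 1 else 0)"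
        proof (cases "T \<subseteq> S")
          case True
          then show ?thesis unfolding y_def by (simp, intro prod.neutral) auto
        next
          case False
          then obtain j where "j \<in> T" "j \<notin> S" by auto
          then show ?thesis unfolding y_def using fT by (auto intro: prod_zero)
        qed
      qed simp
      also have "\<dots> = (\<Sum>T\<in>{T \<in> {T. T \<subseteq> I \<and> card T = p}. T \<subseteq> S}. 1)"
        by (rule sum.inter_filter[symmetric]) (use fin in auto)
      also have "{T \<in> {T. T \<subseteq> I \<and> card T = p}. T \<subseteq> S} = {T. T \<subseteq> S \<and> card T = p}"
        using SI by auto
      also have "(\<Sum>T\<in>{T. T \<subseteq> S \<and> card T = p}. (1::int)) = int (card S choose p)"
        using n_subsets[OF SI(2), of p] by simp
      finally show ?thesis .
    qed
    have eQ: "Q S = (int (card S) + 1) ^ (p - 1) - int (card S) ^ (p - 1)"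
    proof -
      have "(LN S + 1) ^ (p - 1) = (\<Sum>k\<le>p-1. of_nat (p-1 choose k) * LN S ^ k * 1 ^ (p - 1 - k))"
        by (rule binomial_ring)
      also have "\<dots> = (\<Sum>k<Suc (p-1). of_nat (p-1 choose k) * LN S ^ k)"
        by (simp add: lessThan_Suc_atMost)
      also have "\<dots> = Q S + LN S ^ (p - 1)" unfolding Q_def by simp
      finally show ?thesis using eN by simp
    qed
    have FS: "F S = (1 - (\<Sum>i\<in>S. fst (X i)) ^ (p-1)) * (1 - (\<Sum>i\<in>S. snd (X i)) ^ (p-1)) * Gf p (card S)"
      unfolding F_def Gf_def eA eB eN eC eQ by simp
    have hA: "[1 - (\<Sum>i\<in>S. fst (X i)) ^ (p-1) = (if [(\<Sum>i\<in>S. fst (X i)) = 0] (mod int p) then 1 else 0)] (mod int p)"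
      using cong_diff[OF cong_refl[of 1] fermat_int[OF p, of "\<Sum>i\<in>S. fst (X i)"]] by (simp split: if_splits)
    have hB: "[1 - (\<Sum>i\<in>S. snd (X i)) ^ (p-1) = (if [(\<Sum>i\<in>S. snd (X i)) = 0] (mod int p) then 1 else 0)] (mod int p)"
      using cong_diff[OF cong_refl[of 1] fermat_int[OF p, of "\<Sum>i\<in>S. snd (X i)"]] by (simp split: if_splits)
    have cS: "card S \<le> 4 * p - 3" using card_mono[OF fin SI(1)] cI by simp
    have "(-1::int)^card S * F S = (1 - (\<Sum>i\<in>S. fst (X i)) ^ (p-1)) * (1 - (\<Sum>i\<in>S. snd (X i)) ^ (p-1)) * ((-1)^card S * Gf p (card S))"
      unfolding FS by (simp add: algebra_simps)
    also have "[\<dots> = (if [(\<Sum>i\<in>S. fst (X i)) = 0] (mod int p) then 1 else 0) * (if [(\<Sum>i\<in>S. snd (X i)) = 0] (mod int p) then 1 else 0) * wfun p (card S)] (mod int p)"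
      by (intro cong_mult hA hB G_cong[OF p odd cS])
    also have "(if [(\<Sum>i\<in>S. fst (X i)) = 0] (mod int p) then 1 else 0) * (if [(\<Sum>i\<in>S. snd (X i)) = 0] (mod int p) then 1 else (0::int)) = z S"
      unfolding z_def by simp
    finally show ?thesis .
  qed
  have "[(\<Sum>S\<in>Pow I. (-1::int)^card S * F S) = (\<Sum>S\<in>Pow I. z S * wfun p (card S))] (mod int p)"
    by (rule cong_sum) (rule percong)
  then have main: "[(\<Sum>S\<in>Pow I. z S * wfun p (card S)) = 0] (mod int p)"
    using van by (simp add: cong_sym_eq)
  have cnt: "(\<Sum>S\<in>Pow I. z S * dl k (card S)) = int (zero_sum_count p k I X)" for k
  proof -
    have "(\<Sum>S\<in>Pow I. z S * dl k (card S)) = (\<Sum>S\<in>Pow I. if S \<in> {S. card S = k \<and> [(\<Sum>i\<in>S. fst (X i)) = 0] (mod int p) \<and> [(\<Sum>i\<in>S. snd (X i)) = 0] (mod int p)} then 1 else 0)"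
      unfolding z_def dl_def by (intro sum.cong) auto
    also have "\<dots> = (\<Sum>S\<in>Pow I \<inter> {S. card S = k \<and> [(\<Sum>i\<in>S. fst (X i)) = 0] (mod int p) \<and> [(\<Sum>i\<in>S. snd (X i)) = 0] (mod int p)}. 1)"
      by (rule sum.inter_restrict[symmetric]) (use fin in simp)
    also have "Pow I \<inter> {S. card S = k \<and> [(\<Sum>i\<in>S. fst (X i)) = 0] (mod int p) \<and> [(\<Sum>i\<in>S. snd (X i)) = 0] (mod int p)}
       = {S. S \<subseteq> I \<and> card S = k \<and> [(\<Sum>i\<in>S. fst (X i)) = 0] (mod int p) \<and> [(\<Sum>i\<in>S. snd (X i)) = 0] (mod int p)}" by auto
    finally show ?thesis unfolding zero_sum_count_def by simp
  qed
  have N0: "zero_sum_count p 0 I X = 1"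
  proof -
    have "{S. S \<subseteq> I \<and> card S = 0 \<and> [(\<Sum>i\<in>S. fst (X i)) = 0] (mod int p) \<and> [(\<Sum>i\<in>S. snd (X i)) = 0] (mod int p)} = {{}}"
      using fin by (auto dest: finite_subset)
    then show ?thesis unfolding zero_sum_count_def by simp
  qed
  have "(\<Sum>S\<in>Pow I. z S * wfun p (card S)) =
     3 * (\<Sum>S\<in>Pow I. z S * dl 0 (card S)) - 2 * (\<Sum>S\<in>Pow I. z S * dl (p - 1) (card S))
     - 2 * (\<Sum>S\<in>Pow I. z S * dl p (card S)) + (\<Sum>S\<in>Pow I. z S * dl (2 * p - 1) (card S))
     + (\<Sum>S\<in>Pow I. z S * dl (2 * p) (card S))"
    unfolding wfun_def by (simp add: sum.distrib sum_subtractf sum_distrib_left algebra_simps)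
  with main show ?thesis unfolding cnt N0 by simp
qed

end
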